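(* Each brick and each brace of a cycle-extendable graph is cycle-extendable.
   Context: Graphs are loopless; multiple edges allowed. A graph is matching covered if it is connected, has at least two vertices, and every edge lies in some perfect matching; it is cycle-extendable if moreover for every even cycle $C$ the graph $G-V(C)$ has a perfect matching. For $X\subseteq V(G)$, $\partial(X)$ is the set of edges with exactly one end in $X$; it is a tight cut if every perfect matching contains exactly one edge of it, and nontrivial if both $X$ and $V(G)\setminus X$ have at least two vertices. The $\partial(X)$-contractions are obtained by shrinking $X$, respectively $V(G)\setminus X$, to a single vertex (keeping parallel edges). The bricks and braces of a matching covered graph are the graphs obtained by repeatedly replacing a graph having a nontrivial tight cut by its two cut-contractions until no nontrivial tight cuts remain: the resulting nonbipartite graphs are its bricks and the bipartite ones its braces. *)

theory Defs
  imports Main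
begin

text \<open>Finite loopless multigraphs: a vertex set, a set of edge labels, and an
  incidence map sending each edge to its (two-element) set of ends.
  Parallel edges are distinct labels with the same ends.\<close>

datatype ('v, 'e) mgraph = MG (verts: "'v set") (edges: "'e set") (ends: "'e \<Rightarrow> 'v set")

definition wf_graph :: "('v, 'e) mgraph \<Rightarrow> bool" where
  "wf_graph G \<longleftrightarrow> finite (verts G) \<and> finite (edges G) \<and>
     (\<forall>e\<in>edges G. ends G e \<subseteq> verts G \<and> card (ends G e) = 2)"

definition connected_via :: "'v set \<Rightarrow> 'e set \<Rightarrow> ('e \<Rightarrow> 'v set) \<Rightarrow> bool" where
  "connected_via W F en \<longleftrightarrow>
     (\<forall>u\<in>W. \<forall>v\<in>W. (u, v) \<in> ({(a, b). \<exists>e\<in>F. en e = {a, b}})\<^sup>*)"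

definition connected :: "('v, 'e) mgraph \<Rightarrow> bool" where
  "connected G \<longleftrightarrow> connected_via (verts G) (edges G) (ends G)"

definition perfect_matching :: "('v, 'e) mgraph \<Rightarrow> 'e set \<Rightarrow> bool" where
  "perfect_matching G M \<longleftrightarrow> M \<subseteq> edges G \<and>
     (\<forall>v\<in>verts G. \<exists>!e. e \<in> M \<and> v \<in> ends G e)"

definition matching_covered :: "('v, 'e) mgraph \<Rightarrow> bool" where
  "matching_covered G \<longleftrightarrow> wf_graph G \<and> connected G \<and> card (verts G) \<ge> 2 \<and>
     (\<forall>e\<in>edges G. \<exists>M. perfect_matching G M \<and> e \<in> M)"

definition delete_verts :: "('v, 'e) mgraph \<Rightarrow> 'v set \<Rightarrow> ('v, 'e) mgraph" where
  "delete_verts G S = MG (verts G - S) {e \<in> edges G. ends G e \<inter> S = {}} (ends G)"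

definition edge_verts :: "('v, 'e) mgraph \<Rightarrow> 'e set \<Rightarrow> 'v set" where
  "edge_verts G C = (\<Union>e\<in>C. ends G e)"

text \<open>C (a set of edges) is a cycle of G: a nonempty connected subgraph in which
  every vertex has degree 2 (a pair of parallel edges is a cycle of length 2).\<close>
definition is_cycle :: "('v, 'e) mgraph \<Rightarrow> 'e set \<Rightarrow> bool" where
  "is_cycle G C \<longleftrightarrow> C \<subseteq> edges G \<and> C \<noteq> {} \<and> finite C \<and>
     (\<forall>v\<in>edge_verts G C. card {e \<in> C. v \<in> ends G e} = 2) \<and>
     connected_via (edge_verts G C) C (ends G)"

definition even_cycle :: "('v, 'e) mgraph \<Rightarrow> 'e set \<Rightarrow> bool" where
  "even_cycle G C \<longleftrightarrow> is_cycle G C \<and> even (card C)"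

definition cycle_extendable :: "('v, 'e) mgraph \<Rightarrow> bool" where
  "cycle_extendable G \<longleftrightarrow> matching_covered G \<and>
     (\<forall>C. even_cycle G C \<longrightarrow> (\<exists>M. perfect_matching (delete_verts G (edge_verts G C)) M))"

definition cut :: "('v, 'e) mgraph \<Rightarrow> 'v set \<Rightarrow> 'e set" where
  "cut G X = {e \<in> edges G. card (ends G e \<inter> X) = 1}"

definition tight_cut :: "('v, 'e) mgraph \<Rightarrow> 'v set \<Rightarrow> bool" where
  "tight_cut G X \<longleftrightarrow> X \<subseteq> verts G \<and>
     (\<forall>M. perfect_matching G M \<longrightarrow> card (M \<inter> cut G X) = 1)"

definition nontrivial_tight_cut :: "('v, 'e) mgraph \<Rightarrow> 'v set \<Rightarrow> bool" where
  "nontrivial_tight_cut G X \<longleftrightarrow> tight_cut G X \<and> card X \<ge> 2 \<and> card (verts G - X) \<ge> 2"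

text \<open>Shrinking X to a single vertex, which is named x (for some x in X);
  edges with both ends in X disappear, parallel edges are kept.\<close>
definition shrink :: "('v, 'e) mgraph \<Rightarrow> 'v set \<Rightarrow> 'v \<Rightarrow> ('v, 'e) mgraph" where
  "shrink G X x = MG ((verts G - X) \<union> {x}) {e \<in> edges G. \<not> ends G e \<subseteq> X}
     (\<lambda>e. (\<lambda>v. if v \<in> X then x else v) ` ends G e)"

text \<open>Graphs arising during a tight cut decomposition of G: replace a graph
  having a nontrivial tight cut \<partial>(X) by its cut-contractions (shrinking X,
  resp. its complement; both are covered since X ranges over all shores).\<close>
inductive tc_piece :: "('v, 'e) mgraph \<Rightarrow> ('v, 'e) mgraph \<Rightarrow> bool" for G where
  start: "tc_piece G G"
| split1: "tc_piece G H \<Longrightarrow> nontrivial_tight_cut H X \<Longrightarrow> x \<in> X \<Longrightarrow>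
            tc_piece G (shrink H X x)"
| split2: "tc_piece G H \<Longrightarrow> nontrivial_tight_cut H X \<Longrightarrow> y \<in> verts H - X \<Longrightarrow>
            tc_piece G (shrink H (verts H - X) y)"

definition bipartite :: "('v, 'e) mgraph \<Rightarrow> bool" where
  "bipartite G \<longleftrightarrow> (\<exists>A \<subseteq> verts G. \<forall>e\<in>edges G. card (ends G e \<inter> A) = 1)"

definition is_brick :: "('v, 'e) mgraph \<Rightarrow> ('v, 'e) mgraph \<Rightarrow> bool" where
  "is_brick G H \<longleftrightarrow> tc_piece G H \<and> \<not> (\<exists>X. nontrivial_tight_cut H X) \<and> \<not> bipartite H"

definition is_brace :: "('v, 'e) mgraph \<Rightarrow> ('v, 'e) mgraph \<Rightarrow> bool" where
  "is_brace G H \<longleftrightarrow> tc_piece G H \<and> \<not> (\<exists>X. nontrivial_tight_cut H X) \<and> bipartite H"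

end

theory Submission
  imports Defs
begin

definition ev :: "('e \<Rightarrow> 'v set) \<Rightarrow> 'e set \<Rightarrow> 'v set" where
  "ev en C = (\<Union>f\<in>C. en f)"

definition RR :: "('e \<Rightarrow> 'v set) \<Rightarrow> 'e set \<Rightarrow> ('v \<times> 'v) set" where
  "RR en C = {(a, b). \<exists>e\<in>C. en e = {a, b}}"

lemma card2_other: "card S = 2 \<Longrightarrow> a \<in> S \<Longrightarrow> \<exists>b. S = {a, b} \<and> a \<noteq> b"
  by (metis card_2_iff insert_commute insertE singletonD)

lemma rt_map:
  assumes "(a, b) \<in> (RR en C)\<^sup>*"
    and "\<And>p q. (p, q) \<in> RR en C \<Longrightarrow> (\<phi> p, \<phi> q) \<in> (RR en2 C2)\<^sup>*"
  shows "(\<phi> a, \<phi> b) \<in> (RR en2 C2)\<^sup>*"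
  using assms(1)
proof (induction rule: rtrancl_induct)
  case base then show ?case by simp
next
  case (step y z) then show ?case using assms(2) rtrancl_trans by metis
qed

lemma rt_closed:
  assumes "(a, b) \<in> (RR en C)\<^sup>*" "a \<in> S"
    and "\<And>f. f \<in> C \<Longrightarrow> en f \<inter> S \<noteq> {} \<Longrightarrow> en f \<subseteq> S"
  shows "b \<in> S"
  using assms(1,2)
proof (induction rule: rtrancl_induct)
  case base then show ?case by simp
next
  case (step y z) then show ?case using assms(3) unfolding RR_def by blast
qed

lemma conn_RR: "connected_via W F en \<longleftrightarrow> (\<forall>u\<in>W. \<forall>v\<in>W. (u, v) \<in> (RR en F)\<^sup>*)"
  unfolding connected_via_def RR_def by simp

lemma closed_all:
  assumes "connected_via (ev en C) C en" "u \<in> S" "u \<in> ev en C"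
    and "\<And>f. f \<in> C \<Longrightarrow> en f \<inter> S \<noteq> {} \<Longrightarrow> en f \<subseteq> S"
  shows "ev en C \<subseteq> S"
  using assms rt_closed[of u _ en C S] unfolding conn_RR by blast

lemma even_cycle_pm:
  assumes "finite C" "\<forall>f\<in>C. card (en f) = 2"
    "\<forall>v\<in>ev en C. card {f\<in>C. v \<in> en f} = 2"
    "connected_via (ev en C) C en" "even (card C)" "e \<in> C"
  shows "\<exists>F\<subseteq>C. e \<in> F \<and> (\<forall>v\<in>ev en C. \<exists>!f. f \<in> F \<and> v \<in> en f)"
  using assms
proof (induction "card C" arbitrary: C en e rule: less_induct)
  case less
  note fin = less.prems(1) and c2 = less.prems(2) and deg = less.prems(3)
    and con = less.prems(4) and evn = less.prems(5) and eC = less.prems(6)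
  have inev: "\<And>f y. f \<in> C \<Longrightarrow> y \<in> en f \<Longrightarrow> y \<in> ev en C" unfolding ev_def by blast
  obtain u v where euv: "en e = {u, v}" "u \<noteq> v" using c2 eC by (meson card_2_iff)
  have "card {f\<in>C. v \<in> en f} = 2" using deg inev[OF eC] euv by auto
  then obtain g where g: "{f\<in>C. v \<in> en f} = {e, g}" "e \<noteq> g"
    using card2_other[of "{f\<in>C. v \<in> en f}" e] eC euv by auto
  have gC: "g \<in> C" and vg: "v \<in> en g" using g by blast+
  obtain w where w: "en g = {v, w}" "v \<noteq> w"
    using card2_other[of "en g" v] c2 gC vg by auto
  show ?case
  proof (cases "w = u")
    case True
    have "ev en C \<subseteq> {u, v}"
    proof (rule closed_all[OF con, of u])
      show "u \<in> ev en C" using inev[OF eC] euv by auto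
      fix f assume f: "f \<in> C" "en f \<inter> {u, v} \<noteq> {}"
      have "card {f\<in>C. u \<in> en f} = 2" using deg inev[OF eC] euv by auto
      moreover have "{e, g} \<subseteq> {f\<in>C. u \<in> en f}" using eC gC euv w True by auto
      ultimately have gu: "{f\<in>C. u \<in> en f} = {e, g}"
        by (metis card_2_iff card_subset_eq finite.emptyI finite.insertI g(2))
      from f have "f \<in> {e, g}" using g gu by blast
      then show "en f \<subseteq> {u, v}" using euv w True by auto
    qed auto
    show ?thesis
    proof (intro exI[of _ "{e}"] conjI)
      show "\<forall>y\<in>ev en C. \<exists>!f. f \<in> {e} \<and> y \<in> en f"
        using \<open>ev en C \<subseteq> {u, v}\<close> euv by auto
    qed (use eC in auto)
  next
    case wu: False
    have "card {f\<in>C. w \<in> en f} = 2" using deg inev[OF gC] w by auto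
    then obtain h where h: "{f\<in>C. w \<in> en f} = {g, h}" "g \<noteq> h"
      using card2_other[of "{f\<in>C. w \<in> en f}" g] gC w by auto
    have hC: "h \<in> C" and wh: "w \<in> en h" using h by blast+
    obtain z where z: "en h = {w, z}" "w \<noteq> z"
      using card2_other[of "en h" w] c2 hC wh by auto
    have he: "h \<noteq> e" using wh euv wu w(2) by auto
    have zv: "z \<noteq> v" using g h he z by blast
    have zu: "z \<noteq> u"
    proof
      assume zu: "z = u"
      have "card {f\<in>C. u \<in> en f} = 2" using deg inev[OF eC] euv by auto
      moreover have "{e, h} \<subseteq> {f\<in>C. u \<in> en f}" using eC hC euv z zu by auto
      ultimately have hu: "{f\<in>C. u \<in> en f} = {e, h}"
        by (metis card_2_iff card_subset_eq finite.emptyI finite.insertI he)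
      have "ev en C \<subseteq> {u, v, w}"
      proof (rule closed_all[OF con, of u])
        show "u \<in> ev en C" using inev[OF eC] euv by auto
        fix f assume f: "f \<in> C" "en f \<inter> {u, v, w} \<noteq> {}"
        from f have "f \<in> {e, g, h}" using g h hu by blast
        then show "en f \<subseteq> {u, v, w}" using euv w z zu by auto
      qed auto
      have "C \<subseteq> {e, g, h}"
      proof
        fix f assume f: "f \<in> C"
        obtain p q where pq: "en f = {p, q}" "p \<noteq> q" using c2 f by (meson card_2_iff)
        have "p \<in> {u, v, w}" using inev[OF f] pq \<open>ev en C \<subseteq> {u, v, w}\<close> by auto
        then show "f \<in> {e, g, h}" using g h hu f pq by auto
      qed
      moreover have "{e, g, h} \<subseteq> C" using eC gC hC by auto
      ultimately have "C = {e, g, h}" by blast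
      then have "card C = 3" using g(2) h(2) he by auto
      then show False using evn by simp
    qed
    define C2 where "C2 = C - {g, h}"
    define en2 where "en2 = en(e := {u, z})"
    have eC2: "e \<in> C2" using g(2) he C2_def eC by auto
    have cardC2': "card C2 = card C - 2" unfolding C2_def using fin gC hC h(2) by auto
    have cardC2: "card C2 < card C" using cardC2' fin eC card_gt_0_iff[of C] by auto
    have notvw: "y \<noteq> v \<and> y \<noteq> w" if "y \<in> ev en2 C2" for y
    proof -
      from that obtain f where f: "f \<in> C2" "y \<in> en2 f" unfolding ev_def by blast
      show ?thesis
      proof (cases "f = e")
        case True then show ?thesis using f euv z zu zv w wu by (auto simp: en2_def)
      next
        case False
        then have "y \<in> en f" "f \<in> C" "f \<noteq> g" "f \<noteq> h" using f by (auto simp: en2_def C2_def)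
        then show ?thesis using g h False by blast
      qed
    qed
    have ev2: "ev en2 C2 \<subseteq> ev en C"
    proof
      fix y assume "y \<in> ev en2 C2"
      then obtain f where f: "f \<in> C2" "y \<in> en2 f" unfolding ev_def by blast
      show "y \<in> ev en C"
      proof (cases "f = e")
        case True then show ?thesis using f euv z inev[OF eC] inev[OF hC] by (auto simp: en2_def)
      next
        case False then show ?thesis using f inev by (auto simp: en2_def C2_def)
      qed
    qed
    have IH: "\<exists>F\<subseteq>C2. e \<in> F \<and> (\<forall>y\<in>ev en2 C2. \<exists>!f. f \<in> F \<and> y \<in> en2 f)"
    proof (rule less.hyps[OF cardC2])
      show "finite C2" using fin C2_def by auto
      show "\<forall>f\<in>C2. card (en2 f) = 2" using c2 zu by (auto simp: en2_def C2_def)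
      show "even (card C2)" using cardC2' evn by simp
      show "e \<in> C2" by (rule eC2)
      show "\<forall>y\<in>ev en2 C2. card {f\<in>C2. y \<in> en2 f} = 2"
      proof
        fix y assume y: "y \<in> ev en2 C2"
        have yvw: "y \<noteq> v" "y \<noteq> w" using notvw[OF y] by auto
        show "card {f\<in>C2. y \<in> en2 f} = 2"
        proof (cases "y = z")
          case True
          have "card {f\<in>C. z \<in> en f} = 2" using deg inev[OF hC] z by auto
          then obtain k where k: "{f\<in>C. z \<in> en f} = {h, k}" "h \<noteq> k"
            using card2_other[of "{f\<in>C. z \<in> en f}" h] hC z by auto
          have ke: "k \<noteq> e" using k euv zu zv by auto
          have kg: "k \<noteq> g" using k w z zv by auto
          have "{f\<in>C2. y \<in> en2 f} = {e, k}"
            using True k ke kg eC2 unfolding C2_def en2_def by auto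
          then show ?thesis using ke by simp
        next
          case yz: False
          show ?thesis
          proof (cases "y = u")
            case True
            have "{f\<in>C2. y \<in> en2 f} = {f\<in>C. u \<in> en f}"
              using True eC euv w z wu zu yz unfolding C2_def en2_def by auto
            then show ?thesis using deg inev[OF eC] euv by auto
          next
            case False
            have "{f\<in>C2. y \<in> en2 f} = {f\<in>C. y \<in> en f}"
              using False yz yvw eC euv w z unfolding C2_def en2_def by auto
            then show ?thesis using deg ev2 y by auto
          qed
        qed
      qed
      show "connected_via (ev en2 C2) C2 en2"
        unfolding conn_RR
      proof (intro ballI)
        fix a b assume a: "a \<in> ev en2 C2" and b: "b \<in> ev en2 C2"
        define \<phi> where "\<phi> = (\<lambda>y. if y = v then u else if y = w then z else y)"
        have "(a, b) \<in> (RR en C)\<^sup>*" using con a b ev2 unfolding conn_RR by blast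
        then have "(\<phi> a, \<phi> b) \<in> (RR en2 C2)\<^sup>*"
        proof (rule rt_map)
          fix p q assume "(p, q) \<in> RR en C"
          then obtain f where f: "f \<in> C" "en f = {p, q}" unfolding RR_def by blast
          show "(\<phi> p, \<phi> q) \<in> (RR en2 C2)\<^sup>*"
          proof (cases "f = e")
            case True
            then have "\<phi> p = \<phi> q" using f euv wu w(2) unfolding \<phi>_def
              by (auto simp: doubleton_eq_iff)
            then show ?thesis by simp
          next
            case fe: False
            show ?thesis
            proof (cases "f = g")
              case True
              then have "{\<phi> p, \<phi> q} = {u, z}" using f w wu unfolding \<phi>_def
                by (auto simp: doubleton_eq_iff)
              then have "(\<phi> p, \<phi> q) \<in> RR en2 C2" using eC2 unfolding RR_def en2_def by auto
              then show ?thesis by simp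
            next
              case fg: False
              show ?thesis
              proof (cases "f = h")
                case True
                then have "\<phi> p = \<phi> q" using f z zv w(2) unfolding \<phi>_def
                  by (auto simp: doubleton_eq_iff)
                then show ?thesis by simp
              next
                case False
                have "p \<noteq> v" "q \<noteq> v" "p \<noteq> w" "q \<noteq> w" using f g h fe fg False by blast+
                then have "(\<phi> p, \<phi> q) \<in> RR en2 C2" using f fe fg False
                  unfolding RR_def en2_def C2_def \<phi>_def by auto
                then show ?thesis by simp
              qed
            qed
          qed
        qed
        moreover have "\<phi> a = a" "\<phi> b = b" using notvw a b unfolding \<phi>_def by auto
        ultimately show "(a, b) \<in> (RR en2 C2)\<^sup>*" by simp
      qed
    qed
    then obtain F2 where F2: "F2 \<subseteq> C2" "e \<in> F2" "\<forall>y\<in>ev en2 C2. \<exists>!f. f \<in> F2 \<and> y \<in> en2 f"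
      by blast
    have uz2: "u \<in> ev en2 C2" "z \<in> ev en2 C2" using eC2 unfolding ev_def en2_def by auto
    show ?thesis
    proof (intro exI[of _ "insert h F2"] conjI ballI)
      show "insert h F2 \<subseteq> C" using F2 hC C2_def by auto
      show "e \<in> insert h F2" using F2 by auto
      fix y assume y: "y \<in> ev en C"
      have hF2: "h \<notin> F2" "g \<notin> F2" using F2 C2_def by auto
      have F2e: "\<And>f. f \<in> F2 \<Longrightarrow> f \<noteq> e \<Longrightarrow> en2 f = en f" by (simp add: en2_def)
      have F2C: "\<And>f. f \<in> F2 \<Longrightarrow> f \<in> C" using F2(1) C2_def by auto
      have uniq2: "\<And>f1 f2 x. x \<in> ev en2 C2 \<Longrightarrow> f1 \<in> F2 \<Longrightarrow> f2 \<in> F2 \<Longrightarrow> x \<in> en2 f1 \<Longrightarrow> x \<in> en2 f2 \<Longrightarrow> f1 = f2"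
        using F2(3) by blast
      have e2: "en2 e = {u, z}" by (simp add: en2_def)
      show "\<exists>!f. f \<in> insert h F2 \<and> y \<in> en f"
      proof (cases "y = u")
        case True
        show ?thesis
        proof (rule ex1I[of _ e])
          show "e \<in> insert h F2 \<and> y \<in> en e" using F2(2) True euv by auto
          fix f assume f: "f \<in> insert h F2 \<and> y \<in> en f"
          show "f = e"
          proof (rule ccontr)
            assume fe: "f \<noteq> e"
            have "f \<noteq> h" using f z True wu zu by auto
            then have "f \<in> F2" "u \<in> en2 f" using f fe True by (auto simp: en2_def)
            then show False using uniq2[OF uz2(1) _ F2(2)] e2 fe by auto
          qed
        qed
      next
        case yu: False
        show ?thesis
        proof (cases "y = v")
          case True
          show ?thesis
          proof (rule ex1I[of _ e])
            show "e \<in> insert h F2 \<and> y \<in> en e" using F2(2) True euv by auto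
            fix f assume f: "f \<in> insert h F2 \<and> y \<in> en f"
            then have "f \<in> C" using hC F2C by auto
            then have "f = e \<or> f = g" using g f True by blast
            then show "f = e" using f hF2 h(2) by auto
          qed
        next
          case yv: False
          show ?thesis
          proof (cases "y = w")
            case True
            show ?thesis
            proof (rule ex1I[of _ h])
              show "h \<in> insert h F2 \<and> y \<in> en h" using True z by auto
              fix f assume f: "f \<in> insert h F2 \<and> y \<in> en f"
              then have "f \<in> C" using hC F2C by auto
              then have "f = g \<or> f = h" using h f True by blast
              then show "f = h" using f hF2 h(2) by auto
            qed
          next
            case yw: False
            show ?thesis
            proof (cases "y = z")
              case True
              show ?thesis
              proof (rule ex1I[of _ h])
                show "h \<in> insert h F2 \<and> y \<in> en h" using True z by auto
                fix f assume f: "f \<in> insert h F2 \<and> y \<in> en f"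
                show "f = h"
                proof (rule ccontr)
                  assume fh: "f \<noteq> h"
                  have fe: "f \<noteq> e" using f True euv zu zv by auto
                  then have "f \<in> F2" "z \<in> en2 f" using f fh True by (auto simp: en2_def)
                  then show False using uniq2[OF uz2(2) _ F2(2)] e2 fe by auto
                qed
              qed
            next
              case yz: False
              obtain f0 where f0: "f0 \<in> C" "y \<in> en f0" using y unfolding ev_def by blast
              have f0n: "f0 \<noteq> e" "f0 \<noteq> g" "f0 \<noteq> h" using f0 euv w z yu yv yw yz by auto
              then have y2: "y \<in> ev en2 C2" using f0 unfolding ev_def en2_def C2_def by auto
              then obtain f1 where f1: "f1 \<in> F2" "y \<in> en2 f1" using F2(3) by blast
              have f1e: "f1 \<noteq> e" using f1 e2 yu yz by auto
              show ?thesis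
              proof (rule ex1I[of _ f1])
                show "f1 \<in> insert h F2 \<and> y \<in> en f1" using f1 f1e by (auto simp: en2_def)
                fix f assume f: "f \<in> insert h F2 \<and> y \<in> en f"
                have "f \<noteq> h" using f z yw yz by auto
                moreover have "f \<noteq> e" using f euv yu yv by auto
                ultimately have "f \<in> F2" "y \<in> en2 f" using f by (auto simp: en2_def)
                then show "f = f1" using uniq2[OF y2 _ f1(1)] f1 by auto
              qed
            qed
          qed
        qed
      qed
    qed
  qed
qed

lemma fin2: "card A = 2 \<Longrightarrow> finite A"
  by (rule card_ge_0_finite) simp

lemma pm_card:
  assumes "finite W" "finite F" "\<forall>f\<in>F. card (en f) = 2 \<and> en f \<subseteq> W"
    "\<forall>v\<in>W. \<exists>!f. f \<in> F \<and> v \<in> en f"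
  shows "card W = 2 * card F"
proof -
  have W: "W = (\<Union>f\<in>F. en f)"
  proof
    show "W \<subseteq> (\<Union>f\<in>F. en f)" using assms(4) by blast
    show "(\<Union>f\<in>F. en f) \<subseteq> W" using assms(3) by blast
  qed
  have fin: "\<forall>f\<in>F. finite (en f)" using assms(1,3) finite_subset by blast
  have disj: "\<forall>f1\<in>F. \<forall>f2\<in>F. f1 \<noteq> f2 \<longrightarrow> en f1 \<inter> en f2 = {}"
    using assms(3,4) by blast
  have "card W = (\<Sum>f\<in>F. card (en f))"
    unfolding W by (rule card_UN_disjoint[OF assms(2) fin disj])
  also have "\<dots> = (\<Sum>f\<in>F. 2)" using assms(3) by simp
  finally show ?thesis by simp
qed

lemma pm_complement:
  assumes "\<forall>v\<in>ev en C. card {f\<in>C. v \<in> en f} = 2" "F \<subseteq> C"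
    "\<forall>v\<in>ev en C. \<exists>!f. f \<in> F \<and> v \<in> en f"
  shows "\<forall>v\<in>ev en C. \<exists>!f. f \<in> C - F \<and> v \<in> en f"
proof
  fix v assume v: "v \<in> ev en C"
  obtain a b where ab: "{f\<in>C. v \<in> en f} = {a, b}" "a \<noteq> b"
    using assms(1) v by (meson card_2_iff)
  obtain f0 where f0: "f0 \<in> F" "v \<in> en f0" and u: "\<And>f. f \<in> F \<Longrightarrow> v \<in> en f \<Longrightarrow> f = f0"
    using assms(3) v by blast
  have Fab: "\<And>f. f \<in> C \<Longrightarrow> v \<in> en f \<Longrightarrow> f = a \<or> f = b" using ab by blast
  have abC: "a \<in> C" "v \<in> en a" "b \<in> C" "v \<in> en b" using ab by blast+
  have "f0 = a \<or> f0 = b" using f0 assms(2) Fab by blast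
  then show "\<exists>!f. f \<in> C - F \<and> v \<in> en f"
  proof
    assume a0: "f0 = a"
    have "b \<notin> F" using u abC ab(2) a0 by blast
    show ?thesis
    proof (rule ex1I[of _ b])
      show "b \<in> C - F \<and> v \<in> en b" using abC \<open>b \<notin> F\<close> by blast
      fix f assume "f \<in> C - F \<and> v \<in> en f"
      then show "f = b" using Fab a0 f0 by blast
    qed
  next
    assume b0: "f0 = b"
    have "a \<notin> F" using u abC ab(2) b0 by blast
    show ?thesis
    proof (rule ex1I[of _ a])
      show "a \<in> C - F \<and> v \<in> en a" using abC \<open>a \<notin> F\<close> by blast
      fix f assume "f \<in> C - F \<and> v \<in> en f"
      then show "f = a" using Fab b0 f0 by blast
    qed
  qed
qed

lemma ev_subset: "f \<in> C \<Longrightarrow> en f \<subseteq> ev en C"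
  unfolding ev_def by blast

lemma pm_even:
  assumes "finite C" "\<forall>f\<in>C. card (en f) = 2"
    "\<forall>v\<in>ev en C. card {f\<in>C. v \<in> en f} = 2" "F \<subseteq> C"
    "\<forall>v\<in>ev en C. \<exists>!f. f \<in> F \<and> v \<in> en f"
  shows "even (card C)"
proof -
  have "\<forall>f\<in>C. finite (en f)" using assms(2) fin2 by blast
  then have finW: "finite (ev en C)" unfolding ev_def using assms(1) by simp
  have fF: "finite F" by (rule finite_subset[OF assms(4,1)])
  have a1: "\<forall>f\<in>F. card (en f) = 2 \<and> en f \<subseteq> ev en C" using assms(2,4) ev_subset by (metis subsetD)
  have a2: "\<forall>f\<in>C - F. card (en f) = 2 \<and> en f \<subseteq> ev en C" using assms(2) ev_subset by (metis DiffD1)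
  have c1: "card (ev en C) = 2 * card F"
    by (rule pm_card[OF finW fF a1 assms(5)])
  have c2: "card (ev en C) = 2 * card (C - F)"
    by (rule pm_card[OF finW _ a2 pm_complement[OF assms(3,4,5)]]) (simp add: assms(1))
  have "card (C - F) = card C - card F" using card_Diff_subset[OF fF assms(4)] .
  moreover have "card F \<le> card C" using card_mono[OF assms(1,4)] .
  ultimately have "card C = card F + card (C - F)" by simp
  then show ?thesis using c1 c2 by simp
qed

lemma RR_cong: "\<forall>f\<in>C. en1 f = en2 f \<Longrightarrow> RR en1 C = RR en2 C"
  unfolding RR_def by auto

lemma ev_cong: "\<forall>f\<in>C. en1 f = en2 f \<Longrightarrow> ev en1 C = ev en2 C"
  unfolding ev_def by auto

lemma edge_verts_ev: "edge_verts G C = ev (ends G) C"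
  unfolding edge_verts_def ev_def by simp

lemma RR_sym: "(a, b) \<in> RR en C \<Longrightarrow> (b, a) \<in> RR en C"
  unfolding RR_def by (auto simp: insert_commute)

lemma RR_rt_sym: "(a, b) \<in> (RR en C)\<^sup>* \<Longrightarrow> (b, a) \<in> (RR en C)\<^sup>*"
proof (induction rule: rtrancl_induct)
  case base then show ?case by simp
next
  case (step y z)
  then show ?case using RR_sym by (meson converse_rtrancl_into_rtrancl)
qed

lemma pm_delete_iff:
  "perfect_matching (delete_verts G D) N \<longleftrightarrow>
     N \<subseteq> edges G \<and> (\<forall>f\<in>N. ends G f \<inter> D = {}) \<and>
     (\<forall>v\<in>verts G - D. \<exists>!e. e \<in> N \<and> v \<in> ends G e)"
  unfolding perfect_matching_def delete_verts_def by auto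

lemma pm_delete_empty: "perfect_matching (delete_verts G {}) N \<longleftrightarrow> perfect_matching G N"
  unfolding perfect_matching_def delete_verts_def by auto

locale shr =
  fixes H :: "('v, 'e) mgraph" and X :: "'v set" and x :: 'v
  assumes wf: "wf_graph H" and XV: "X \<subseteq> verts H" and xX: "x \<in> X"
    and nz: "verts H - X \<noteq> {}"
    and tight: "\<And>M. perfect_matching H M \<Longrightarrow> card (M \<inter> cut H X) = 1"
begin

definition phi where "phi v = (if v \<in> X then x else v)"

abbreviation S where "S \<equiv> shrink H X x"

lemma S_verts: "verts S = (verts H - X) \<union> {x}"
  unfolding shrink_def by simp
lemma S_edges: "edges S = {e \<in> edges H. \<not> ends H e \<subseteq> X}"
  unfolding shrink_def by simp
lemma S_ends: "ends S e = phi ` ends H e"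
  unfolding shrink_def phi_def by simp

lemma finV: "finite (verts H)" and finE: "finite (edges H)"
  using wf unfolding wf_graph_def by auto

lemma ends2: assumes "e \<in> edges H"
  shows "\<exists>p q. ends H e = {p, q} \<and> p \<noteq> q \<and> p \<in> verts H \<and> q \<in> verts H"
proof -
  have "card (ends H e) = 2" "ends H e \<subseteq> verts H" using wf assms unfolding wf_graph_def by auto
  then show ?thesis by (metis card_2_iff insert_subset)
qed

lemma card_ends: "e \<in> edges H \<Longrightarrow> card (ends H e) = 2"
  using wf unfolding wf_graph_def by auto

lemma ends_V: "e \<in> edges H \<Longrightarrow> ends H e \<subseteq> verts H"
  using wf unfolding wf_graph_def by auto

lemma cut_iff: "e \<in> cut H X \<longleftrightarrow> e \<in> edges H \<and> ends H e \<inter> X \<noteq> {} \<and> \<not> ends H e \<subseteq> X"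
proof (cases "e \<in> edges H")
  case True
  then obtain p q where pq: "ends H e = {p, q}" "p \<noteq> q" using ends2 by blast
  have "card ({p, q} \<inter> X) = 1 \<longleftrightarrow> {p, q} \<inter> X \<noteq> {} \<and> \<not> {p, q} \<subseteq> X"
    using pq(2) by (cases "p \<in> X"; cases "q \<in> X") auto
  then show ?thesis using True pq unfolding cut_def by simp
next
  case False then show ?thesis unfolding cut_def by simp
qed

lemma phi_in: "v \<notin> X \<Longrightarrow> phi v = v" and phi_inX: "v \<in> X \<Longrightarrow> phi v = x"
  unfolding phi_def by simp_all

lemma phi_out: assumes "v \<notin> X" shows "v \<in> phi ` A \<longleftrightarrow> v \<in> A"
proof
  assume "v \<in> phi ` A"
  then obtain a where a: "a \<in> A" "v = phi a" by blast
  show "v \<in> A"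
  proof (cases "a \<in> X")
    case True then have "v = x" using a phi_inX by simp
    then show ?thesis using assms xX by simp
  next
    case False then show ?thesis using a phi_in by simp
  qed
next
  assume "v \<in> A"
  then show "v \<in> phi ` A" using phi_in[OF assms] by (metis image_eqI)
qed

lemma phi_x: "x \<in> phi ` A \<longleftrightarrow> A \<inter> X \<noteq> {}"
proof
  assume "x \<in> phi ` A"
  then obtain a where a: "a \<in> A" "x = phi a" by blast
  then have "a \<in> X" using xX phi_in by (cases "a \<in> X") auto
  then show "A \<inter> X \<noteq> {}" using a by blast
next
  assume "A \<inter> X \<noteq> {}"
  then obtain a where "a \<in> A" "a \<in> X" by blast
  then show "x \<in> phi ` A" using phi_inX by (metis image_eqI)
qed

lemma phi_disj: assumes "A \<inter> X = {}" shows "phi ` A = A"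
proof -
  have "\<forall>a\<in>A. phi a = a" using assms phi_in by blast
  then show ?thesis by simp
qed

lemma phi_V: "v \<in> verts H \<Longrightarrow> phi v \<in> verts S"
  unfolding S_verts phi_def by auto

lemma wf_S: "wf_graph S"
  unfolding wf_graph_def
proof (intro conjI ballI)
  show "finite (verts S)" using finV S_verts by simp
  show "finite (edges S)" using finE S_edges by simp
  fix e assume e: "e \<in> edges S"
  then have eH: "e \<in> edges H" and nX: "\<not> ends H e \<subseteq> X" using S_edges by auto
  obtain p q where pq: "ends H e = {p, q}" "p \<noteq> q" "p \<in> verts H" "q \<in> verts H"
    using ends2[OF eH] by blast
  show "ends S e \<subseteq> verts S" using pq phi_V S_ends by auto
  have "phi p \<noteq> phi q" using pq nX xX unfolding phi_def by auto
  then show "card (ends S e) = 2" using pq S_ends by simp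
qed

lemma conn_S: assumes "connected H" shows "connected S"
  unfolding connected_def conn_RR
proof (intro ballI)
  have cH: "\<forall>u\<in>verts H. \<forall>v\<in>verts H. (u, v) \<in> (RR (ends H) (edges H))\<^sup>*"
    using assms unfolding connected_def conn_RR .
  have pre: "\<exists>u'\<in>verts H. u = phi u'" if "u \<in> verts S" for u
  proof (cases "u = x")
    case True
    have "x \<in> verts H" "phi x = x" using xX XV phi_inX by auto
    then show ?thesis using True by metis
  next
    case False then have "u \<in> verts H - X" using that S_verts by auto
    then show ?thesis using phi_in by force
  qed
  fix u v assume u: "u \<in> verts S" and v: "v \<in> verts S"
  obtain u' v' where uv: "u' \<in> verts H" "v' \<in> verts H" "u = phi u'" "v = phi v'"
    using pre u v by metis
  have "(phi u', phi v') \<in> (RR (ends S) (edges S))\<^sup>*"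
  proof (rule rt_map[where \<phi>=phi and a=u' and b=v'])
    show "(u', v') \<in> (RR (ends H) (edges H))\<^sup>*" using cH uv by blast
    fix p q assume "(p, q) \<in> RR (ends H) (edges H)"
    then obtain e where e: "e \<in> edges H" "ends H e = {p, q}" unfolding RR_def by blast
    show "(phi p, phi q) \<in> (RR (ends S) (edges S))\<^sup>*"
    proof (cases "ends H e \<subseteq> X")
      case True then have "phi p = phi q" using e phi_inX by simp
      then show ?thesis by simp
    next
      case False
      then have "e \<in> edges S" "ends S e = {phi p, phi q}" using e S_edges S_ends by auto
      then have "(phi p, phi q) \<in> RR (ends S) (edges S)" unfolding RR_def by blast
      then show ?thesis by simp
    qed
  qed
  then show "(u, v) \<in> (RR (ends S) (edges S))\<^sup>*" using uv by simp
qed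

lemma card_S: "card (verts S) \<ge> 2"
proof -
  obtain w where w: "w \<in> verts H - X" using nz by blast
  have "w \<noteq> x" using w xX by blast
  moreover have "{w, x} \<subseteq> verts S" using w S_verts by auto
  moreover have "finite (verts S)" using wf_S unfolding wf_graph_def by simp
  ultimately show ?thesis by (metis card_2_iff card_mono)
qed

lemma R1:
  assumes N: "N \<subseteq> edges H" and D: "D \<subseteq> verts H - X"
    and cov: "\<forall>v\<in>verts H - D. \<exists>!f. f \<in> N \<and> v \<in> ends H f"
    and dis: "\<forall>f\<in>N. ends H f \<inter> D = {}"
    and c1: "card (N \<inter> cut H X) = 1"
  shows "perfect_matching (delete_verts S D) {f\<in>N. \<not> ends H f \<subseteq> X}"
  unfolding pm_delete_iff
proof (intro conjI ballI)
  show "{f\<in>N. \<not> ends H f \<subseteq> X} \<subseteq> edges S" using N S_edges by auto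
  fix f assume f: "f \<in> {f\<in>N. \<not> ends H f \<subseteq> X}"
  show "ends S f \<inter> D = {}"
  proof (rule ccontr)
    assume "ends S f \<inter> D \<noteq> {}"
    then obtain v where v: "v \<in> ends S f" "v \<in> D" by blast
    then have "v \<notin> X" using D by blast
    then have "v \<in> ends H f" using v phi_out S_ends by simp
    then show False using dis f v by blast
  qed
next
  fix v assume v: "v \<in> verts S - D"
  obtain c where c: "N \<inter> cut H X = {c}" using c1 card_1_singletonE by blast
  show "\<exists>!e. e \<in> {f\<in>N. \<not> ends H f \<subseteq> X} \<and> v \<in> ends S e"
  proof (cases "v = x")
    case True
    have cc: "c \<in> N" "ends H c \<inter> X \<noteq> {}" "\<not> ends H c \<subseteq> X" using c cut_iff by auto
    show ?thesis
    proof (rule ex1I[of _ c])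
      show "c \<in> {f\<in>N. \<not> ends H f \<subseteq> X} \<and> v \<in> ends S c"
        using cc True phi_x S_ends by simp
      fix e assume e: "e \<in> {f\<in>N. \<not> ends H f \<subseteq> X} \<and> v \<in> ends S e"
      then have "ends H e \<inter> X \<noteq> {}" using True phi_x S_ends by simp
      then have "e \<in> N \<inter> cut H X" using e N cut_iff by auto
      then show "e = c" using c by blast
    qed
  next
    case False
    then have vX: "v \<notin> X" "v \<in> verts H - D" using v S_verts by auto
    have eq: "\<And>e. v \<in> ends S e \<longleftrightarrow> v \<in> ends H e" using phi_out[OF vX(1)] S_ends by simp
    obtain f where f: "f \<in> N" "v \<in> ends H f" and u: "\<And>g. g \<in> N \<Longrightarrow> v \<in> ends H g \<Longrightarrow> g = f"
      using cov vX(2) by blast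
    show ?thesis
    proof (rule ex1I[of _ f])
      show "f \<in> {f\<in>N. \<not> ends H f \<subseteq> X} \<and> v \<in> ends S f" using f vX eq by blast
      fix e assume "e \<in> {f\<in>N. \<not> ends H f \<subseteq> X} \<and> v \<in> ends S e"
      then show "e = f" using u eq by blast
    qed
  qed
qed

lemma R2:
  assumes N: "N \<subseteq> edges H" and D': "D' \<subseteq> verts H"
    and cov: "\<forall>v\<in>verts H - D'. \<exists>!f. f \<in> N \<and> v \<in> ends H f"
    and dis: "\<forall>f\<in>N. ends H f \<inter> D' = {}"
    and c0: "N \<inter> cut H X = {}" and DD: "D' - X = D"
  shows "perfect_matching (delete_verts S (insert x D)) {f\<in>N. ends H f \<inter> X = {}}"
  unfolding pm_delete_iff
proof (intro conjI ballI)
  show "{f\<in>N. ends H f \<inter> X = {}} \<subseteq> edges S"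
  proof
    fix f assume f: "f \<in> {f\<in>N. ends H f \<inter> X = {}}"
    then have "f \<in> edges H" using N by blast
    then obtain p q where "ends H f = {p, q}" using ends2 by blast
    then have "\<not> ends H f \<subseteq> X" using f by auto
    then show "f \<in> edges S" using S_edges \<open>f \<in> edges H\<close> by simp
  qed
  fix f assume f: "f \<in> {f\<in>N. ends H f \<inter> X = {}}"
  then have "ends S f = ends H f" using S_ends phi_disj by simp
  then show "ends S f \<inter> insert x D = {}" using f dis DD xX by blast
next
  fix v assume v: "v \<in> verts S - insert x D"
  then have vX: "v \<notin> X" "v \<in> verts H - D'" using S_verts DD by auto
  have eq: "\<And>e. v \<in> ends S e \<longleftrightarrow> v \<in> ends H e" using phi_out[OF vX(1)] S_ends by simp
  obtain f where f: "f \<in> N" "v \<in> ends H f" and u: "\<And>g. g \<in> N \<Longrightarrow> v \<in> ends H g \<Longrightarrow> g = f"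
    using cov vX(2) by blast
  have "f \<notin> cut H X" using c0 f by blast
  then have fX: "ends H f \<inter> X = {}" using cut_iff f N vX by blast
  show "\<exists>!e. e \<in> {f\<in>N. ends H f \<inter> X = {}} \<and> v \<in> ends S e"
  proof (rule ex1I[of _ f])
    show "f \<in> {f\<in>N. ends H f \<inter> X = {}} \<and> v \<in> ends S f" using f fX eq by blast
    fix e assume "e \<in> {f\<in>N. ends H f \<inter> X = {}} \<and> v \<in> ends S e"
    then show "e = f" using u eq by blast
  qed
qed

lemma mc_S: assumes "matching_covered H" shows "matching_covered S"
  unfolding matching_covered_def
proof (intro conjI ballI)
  show "wf_graph S" by (rule wf_S)
  show "connected S" using assms conn_S unfolding matching_covered_def by blast
  show "2 \<le> card (verts S)" by (rule card_S)
  fix e assume e: "e \<in> edges S"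
  then have eH: "e \<in> edges H" and nX: "\<not> ends H e \<subseteq> X" using S_edges by auto
  obtain M where M: "perfect_matching H M" "e \<in> M"
    using assms eH unfolding matching_covered_def by blast
  have "perfect_matching (delete_verts S {}) {f\<in>M. \<not> ends H f \<subseteq> X}"
    by (rule R1) (use M tight in \<open>auto simp: perfect_matching_def\<close>)
  then show "\<exists>M. perfect_matching S M \<and> e \<in> M"
    using M nX pm_delete_empty by blast
qed

end

context shr begin

lemma pm_union:
  assumes N: "perfect_matching (delete_verts H W) N" and W: "W = ev (ends H) C"
    and F: "F \<subseteq> C" "C \<subseteq> edges H" "\<forall>v\<in>W. \<exists>!f. f \<in> F \<and> v \<in> ends H f"
  shows "perfect_matching H (N \<union> F)"
proof -
  have N1: "N \<subseteq> edges H" and N2: "\<forall>f\<in>N. ends H f \<inter> W = {}"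
    and N3: "\<forall>v\<in>verts H - W. \<exists>!e. e \<in> N \<and> v \<in> ends H e"
    using N unfolding pm_delete_iff by auto
  show ?thesis unfolding perfect_matching_def
  proof (intro conjI ballI)
    show "N \<union> F \<subseteq> edges H" using N1 F by blast
    fix v assume v: "v \<in> verts H"
    show "\<exists>!e. e \<in> N \<union> F \<and> v \<in> ends H e"
    proof (cases "v \<in> W")
      case True
      obtain f where f: "f \<in> F" "v \<in> ends H f" and u: "\<And>g. g \<in> F \<Longrightarrow> v \<in> ends H g \<Longrightarrow> g = f"
        using F(3) True by blast
      show ?thesis
      proof (rule ex1I[of _ f])
        show "f \<in> N \<union> F \<and> v \<in> ends H f" using f by blast
        fix e assume e: "e \<in> N \<union> F \<and> v \<in> ends H e"
        then have "e \<notin> N" using N2 True by blast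
        then show "e = f" using e u by blast
      qed
    next
      case False
      obtain f where f: "f \<in> N" "v \<in> ends H f" and u: "\<And>g. g \<in> N \<Longrightarrow> v \<in> ends H g \<Longrightarrow> g = f"
        using N3 False v by blast
      show ?thesis
      proof (rule ex1I[of _ f])
        show "f \<in> N \<union> F \<and> v \<in> ends H f" using f by blast
        fix e assume e: "e \<in> N \<union> F \<and> v \<in> ends H e"
        have "e \<notin> F"
        proof
          assume "e \<in> F"
          then have "e \<in> C" using F by blast
          then have "v \<in> W" using e W ev_subset[of e C "ends H"] by auto
          then show False using False by blast
        qed
        then show "e = f" using e u by blast
      qed
    qed
  qed
qed

lemma case1:
  assumes ce: "cycle_extendable H" and C: "even_cycle S C" and nx: "x \<notin> edge_verts S C"
  shows "\<exists>M. perfect_matching (delete_verts S (edge_verts S C)) M"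
proof -
  have cyc: "is_cycle S C" and evC: "even (card C)" using C unfolding even_cycle_def by auto
  have CS: "C \<subseteq> edges S" and Cne: "C \<noteq> {}" and finC: "finite C"
    and deg: "\<forall>v\<in>ev (ends S) C. card {e\<in>C. v \<in> ends S e} = 2"
    and con: "connected_via (ev (ends S) C) C (ends S)"
    using cyc unfolding is_cycle_def edge_verts_ev by auto
  have CH: "C \<subseteq> edges H" using CS S_edges by auto
  have fX: "\<forall>f\<in>C. ends H f \<inter> X = {}"
  proof
    fix f assume f: "f \<in> C"
    have "x \<notin> ends S f" using nx f ev_subset[of f C "ends S"] unfolding edge_verts_ev by auto
    then show "ends H f \<inter> X = {}" using phi_x S_ends by simp
  qed
  have same: "\<forall>f\<in>C. ends S f = ends H f" using fX phi_disj S_ends by simp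
  have evq: "ev (ends S) C = ev (ends H) C" using ev_cong[OF same] .
  have RRq: "RR (ends S) C = RR (ends H) C" using RR_cong[OF same] .
  have degq: "\<And>v. {e\<in>C. v \<in> ends S e} = {e\<in>C. v \<in> ends H e}" using same by auto
  have conH: "connected_via (ev (ends H) C) C (ends H)"
    using con unfolding conn_RR evq RRq .
  have degH: "\<forall>v\<in>ev (ends H) C. card {e\<in>C. v \<in> ends H e} = 2"
    using deg unfolding evq degq .
  have "even_cycle H C"
    unfolding even_cycle_def is_cycle_def edge_verts_ev
    using CH Cne finC degH conH evC by simp
  then obtain N where N: "perfect_matching (delete_verts H (ev (ends H) C)) N"
    using ce unfolding cycle_extendable_def edge_verts_ev by blast
  obtain e0 where e0: "e0 \<in> C" using Cne by blast
  have c2: "\<forall>f\<in>C. card (ends H f) = 2" using CH card_ends by blast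
  obtain F where F: "F \<subseteq> C" "\<forall>v\<in>ev (ends H) C. \<exists>!f. f \<in> F \<and> v \<in> ends H f"
    using even_cycle_pm[OF finC c2 degH conH evC e0] by blast
  have PM: "perfect_matching H (N \<union> F)"
    by (rule pm_union[OF N refl F(1) CH F(2)])
  have "F \<inter> cut H X = {}"
  proof (rule ccontr)
    assume "F \<inter> cut H X \<noteq> {}"
    then obtain f where "f \<in> F" "f \<in> cut H X" by blast
    then show False using F(1) fX cut_iff[of f] by auto
  qed
  then have "(N \<union> F) \<inter> cut H X = N \<inter> cut H X" by blast
  then have c1: "card (N \<inter> cut H X) = 1" using tight[OF PM] by simp
  have N1: "N \<subseteq> edges H" and N2: "\<forall>f\<in>N. ends H f \<inter> ev (ends H) C = {}"
    and N3: "\<forall>v\<in>verts H - ev (ends H) C. \<exists>!e. e \<in> N \<and> v \<in> ends H e"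
    using N unfolding pm_delete_iff by auto
  have D: "ev (ends H) C \<subseteq> verts H - X"
  proof
    fix v assume "v \<in> ev (ends H) C"
    then obtain f where "f \<in> C" "v \<in> ends H f" unfolding ev_def by blast
    then show "v \<in> verts H - X" using fX CH ends_V by (meson Diff_iff disjoint_iff subsetD)
  qed
  have "perfect_matching (delete_verts S (ev (ends H) C)) {f\<in>N. \<not> ends H f \<subseteq> X}"
    by (rule R1[OF N1 D N3 N2 c1])
  then show ?thesis unfolding edge_verts_ev evq by blast
qed

end

lemma pm_uniq: "perfect_matching G M \<Longrightarrow> v \<in> verts G \<Longrightarrow> f \<in> M \<Longrightarrow> v \<in> ends G f
  \<Longrightarrow> g \<in> M \<Longrightarrow> v \<in> ends G g \<Longrightarrow> f = g"
  unfolding perfect_matching_def by blast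

lemma pm_ex: "perfect_matching G M \<Longrightarrow> v \<in> verts G \<Longrightarrow> \<exists>f. f \<in> M \<and> v \<in> ends G f"
  unfolding perfect_matching_def by blast

locale c2 = shr +
  fixes C e1 e2 a1 a2 b1 b2 M M' FC
  assumes ce: "cycle_extendable H"
    and cycS: "is_cycle S C" and evC: "even (card C)"
    and xe: "{e\<in>C. x \<in> ends S e} = {e1, e2}" and e12: "e1 \<noteq> e2"
    and e1e: "ends H e1 = {a1, b1}" "a1 \<in> X" "b1 \<notin> X"
    and e2e: "ends H e2 = {a2, b2}" "a2 \<in> X" "b2 \<notin> X"
    and M: "perfect_matching H M" "M \<inter> cut H X = {e1}"
    and M': "perfect_matching H M'" "M' \<inter> cut H X = {e2}"
    and FC: "FC \<subseteq> C" "e1 \<in> FC" "\<forall>v\<in>ev (ends S) C. \<exists>!f. f \<in> FC \<and> v \<in> ends S f"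
begin

definition "KX = {f \<in> edges H. ends H f \<subseteq> X \<and> ((f \<in> M) \<noteq> (f \<in> M'))}"
definition "K = C \<union> KX"
definition "cmp = {y. (a1, y) \<in> (RR (ends H) K)\<^sup>*}"
definition "Cp = {f \<in> K. ends H f \<subseteq> cmp}"
definition "FM = {f \<in> M. f \<in> KX \<and> ends H f \<subseteq> cmp}"

lemma CS: "C \<subseteq> edges S" and CH: "C \<subseteq> edges H" and finC: "finite C"
  and degS: "\<forall>v\<in>ev (ends S) C. card {e\<in>C. v \<in> ends S e} = 2"
  and conS: "connected_via (ev (ends S) C) C (ends S)"
  using cycS S_edges unfolding is_cycle_def edge_verts_ev by auto

lemma e12C: "e1 \<in> C" "e2 \<in> C" using xe by auto

lemma xVs: "x \<in> ev (ends S) C" using xe e12C ev_subset[of e1 C "ends S"] by auto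

lemma kC: "f \<in> C \<Longrightarrow> f \<noteq> e1 \<Longrightarrow> f \<noteq> e2 \<Longrightarrow> ends H f \<inter> X = {}"
proof (rule ccontr)
  assume f: "f \<in> C" "f \<noteq> e1" "f \<noteq> e2" "ends H f \<inter> X \<noteq> {}"
  then have "x \<in> ends S f" using phi_x S_ends by simp
  then have "f \<in> {e1, e2}" using xe f(1) by blast
  then show False using f by blast
qed

lemma kC_S: "f \<in> C \<Longrightarrow> f \<noteq> e1 \<Longrightarrow> f \<noteq> e2 \<Longrightarrow> ends S f = ends H f"
  using kC phi_disj S_ends by simp

lemma CX: assumes "f \<in> C" "v \<in> ends H f" "v \<in> X"
  shows "(f = e1 \<and> v = a1) \<or> (f = e2 \<and> v = a2)"
proof -
  have "f = e1 \<or> f = e2" using kC assms by blast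
  then show ?thesis using assms e1e e2e by auto
qed

lemma e1cut: "e1 \<in> cut H X" and e2cut: "e2 \<in> cut H X"
  using M(2) M'(2) by auto

lemma e1notM': "e1 \<notin> M'" using M'(2) e1cut e12 by (metis IntI singletonD)
lemma e2notM: "e2 \<notin> M" using M(2) e2cut e12 by (metis IntI singletonD)
lemma e1M: "e1 \<in> M" and e2M': "e2 \<in> M'" using M(2) M'(2) by auto

lemma XV': "v \<in> X \<Longrightarrow> v \<in> verts H" using XV by blast

lemma mX: assumes "v \<in> X" "m \<in> M" "v \<in> ends H m" "v \<noteq> a1"
  shows "ends H m \<subseteq> X" "m \<noteq> e1"
proof -
  show "m \<noteq> e1" using assms e1e by auto
  then have "m \<notin> cut H X" using M(2) assms(2) by blast
  moreover have "m \<in> edges H" using M(1) assms(2) unfolding perfect_matching_def by blast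
  ultimately show "ends H m \<subseteq> X" using cut_iff[of m] assms(1,3) by blast
qed

lemma mX': assumes "v \<in> X" "m \<in> M'" "v \<in> ends H m" "v \<noteq> a2"
  shows "ends H m \<subseteq> X" "m \<noteq> e2"
proof -
  show "m \<noteq> e2" using assms e2e by auto
  then have "m \<notin> cut H X" using M'(2) assms(2) by blast
  moreover have "m \<in> edges H" using M'(1) assms(2) unfolding perfect_matching_def by blast
  ultimately show "ends H m \<subseteq> X" using cut_iff[of m] assms(1,3) by blast
qed

lemma KX_at: assumes "v \<in> X" "f \<in> KX" "v \<in> ends H f" "m \<in> M" "v \<in> ends H m"
    "m' \<in> M'" "v \<in> ends H m'"
  shows "f = m \<or> f = m'"
proof -
  have "f \<in> M \<or> f \<in> M'" using assms(2) unfolding KX_def by auto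
  then show ?thesis using pm_uniq[OF M(1) XV'[OF assms(1)]] pm_uniq[OF M'(1) XV'[OF assms(1)]] assms
    by blast
qed

lemma KX_X: "f \<in> KX \<Longrightarrow> ends H f \<subseteq> X" unfolding KX_def by simp

lemma KH: "K \<subseteq> edges H" using CH unfolding K_def KX_def by auto

lemma MH: "M \<subseteq> edges H" and M'H: "M' \<subseteq> edges H"
  using M(1) M'(1) unfolding perfect_matching_def by auto

lemma K_at_X: assumes "v \<in> X" "v \<noteq> a1" "v \<noteq> a2" "f \<in> K" "v \<in> ends H f"
  shows "f \<in> KX"
  using assms CX unfolding K_def by blast

lemma mK: assumes v: "v \<in> X" "v \<noteq> a1" "v \<in> ev (ends H) K" and m: "m \<in> M" "v \<in> ends H m"
  shows "m \<in> KX"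
proof -
  have mXX: "ends H m \<subseteq> X" using mX[OF v(1) m v(2)] by blast
  obtain m' where m': "m' \<in> M'" "v \<in> ends H m'" using pm_ex[OF M'(1) XV'[OF v(1)]] by blast
  have "m \<notin> M'"
  proof
    assume mM': "m \<in> M'"
    then have mm: "m = m'" using pm_uniq[OF M'(1) XV'[OF v(1)]] m m' by blast
    show False
    proof (cases "v = a2")
      case True
      then have "m' = e2" using pm_uniq[OF M'(1) XV'[OF v(1)]] m' e2M' e2e by blast
      then show False using mm m(1) e2notM by simp
    next
      case False
      obtain f where f: "f \<in> K" "v \<in> ends H f" using v(3) unfolding ev_def by blast
      then have fK: "f \<in> KX" using K_at_X[OF v(1,2) False] by blast
      then have "f = m \<or> f = m'" using KX_at[OF v(1) fK f(2) m m'] by blast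
      then have "f = m" using mm by blast
      then show False using fK mM' m(1) unfolding KX_def by simp
    qed
  qed
  then show ?thesis using mXX m(1) MH unfolding KX_def by blast
qed

lemma m'K: assumes v: "v \<in> X" "v \<noteq> a2" "v \<in> ev (ends H) K" and m': "m' \<in> M'" "v \<in> ends H m'"
  shows "m' \<in> KX"
proof -
  have mXX: "ends H m' \<subseteq> X" using mX'[OF v(1) m' v(2)] by blast
  obtain m where m: "m \<in> M" "v \<in> ends H m" using pm_ex[OF M(1) XV'[OF v(1)]] by blast
  have "m' \<notin> M"
  proof
    assume mM: "m' \<in> M"
    then have mm: "m' = m" using pm_uniq[OF M(1) XV'[OF v(1)]] m m' by blast
    show False
    proof (cases "v = a1")
      case True
      then have "m = e1" using pm_uniq[OF M(1) XV'[OF v(1)]] m e1M e1e by blast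
      then show False using mm m'(1) e1notM' by simp
    next
      case False
      obtain f where f: "f \<in> K" "v \<in> ends H f" using v(3) unfolding ev_def by blast
      then have fK: "f \<in> KX" using K_at_X[OF v(1) False v(2)] by blast
      then have "f = m \<or> f = m'" using KX_at[OF v(1) fK f(2) m m'] by blast
      then have "f = m'" using mm by blast
      then show False using fK mM m'(1) unfolding KX_def by simp
    qed
  qed
  then show ?thesis using mXX m'(1) M'H unfolding KX_def by blast
qed

lemma Kdeg: assumes v: "v \<in> ev (ends H) K" shows "card {f\<in>K. v \<in> ends H f} = 2"
proof (cases "v \<in> X")
  case False
  have eq: "{f\<in>K. v \<in> ends H f} = {f\<in>C. v \<in> ends S f}"
    using False KX_X phi_out[OF False] S_ends unfolding K_def by auto
  obtain f where f: "f \<in> K" "v \<in> ends H f" using v unfolding ev_def by blast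
  then have "f \<in> C" using KX_X False unfolding K_def by blast
  then have "v \<in> ev (ends S) C" using f(2) phi_out[OF False] S_ends unfolding ev_def by auto
  then show ?thesis using eq degS by simp
next
  case vX: True
  obtain m where m: "m \<in> M" "v \<in> ends H m" using pm_ex[OF M(1) XV'[OF vX]] by blast
  obtain m' where m': "m' \<in> M'" "v \<in> ends H m'" using pm_ex[OF M'(1) XV'[OF vX]] by blast
  have at: "\<And>f. f \<in> K \<Longrightarrow> v \<in> ends H f \<Longrightarrow> (f = e1 \<and> v = a1) \<or> (f = e2 \<and> v = a2) \<or> f = m \<or> f = m'"
    using CX[OF _ _ vX] KX_at[OF vX _ _ m m'] unfolding K_def by blast
  show ?thesis
  proof (cases "v = a1")
    case va1: True
    have me: "m = e1" using pm_uniq[OF M(1) XV'[OF vX]] m e1M e1e va1 by blast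
    show ?thesis
    proof (cases "v = a2")
      case True
      have me': "m' = e2" using pm_uniq[OF M'(1) XV'[OF vX]] m' e2M' e2e True by blast
      have "{f\<in>K. v \<in> ends H f} = {e1, e2}"
        using at me me' e12C e1e e2e va1 True unfolding K_def by auto
      then show ?thesis using e12 by simp
    next
      case False
      have mk: "m' \<in> KX" using m'K[OF vX False v m'] .
      have "m' \<noteq> e1" using m'(1) e1notM' by blast
      have "{f\<in>K. v \<in> ends H f} = {e1, m'}"
        using at me mk m' e12C e1e va1 False unfolding K_def by auto
      then show ?thesis using \<open>m' \<noteq> e1\<close> by simp
    qed
  next
    case na1: False
    have mk: "m \<in> KX" using mK[OF vX na1 v m] .
    show ?thesis
    proof (cases "v = a2")
      case True
      have me': "m' = e2" using pm_uniq[OF M'(1) XV'[OF vX]] m' e2M' e2e True by blast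
      have "m \<noteq> e2" using m(1) e2notM by blast
      have "{f\<in>K. v \<in> ends H f} = {e2, m}"
        using at me' mk m e12C e2e na1 True unfolding K_def by auto
      then show ?thesis using \<open>m \<noteq> e2\<close> by simp
    next
      case False
      have mk': "m' \<in> KX" using m'K[OF vX False v m'] .
      have "m \<noteq> m'" using mk m(1) m'(1) unfolding KX_def by auto
      have "{f\<in>K. v \<in> ends H f} = {m, m'}"
        using at mk mk' m m' na1 False unfolding K_def by auto
      then show ?thesis using \<open>m \<noteq> m'\<close> by simp
    qed
  qed
qed

lemma a1c: "a1 \<in> cmp" unfolding cmp_def by simp

lemma e1K: "e1 \<in> K" and e2K: "e2 \<in> K" using e12C unfolding K_def by auto

lemma cmp_step: assumes "f \<in> K" "ends H f \<inter> cmp \<noteq> {}" shows "ends H f \<subseteq> cmp"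
proof -
  obtain p q where pq: "ends H f = {p, q}" using ends2 KH assms(1) by blast
  have st: "(p, q) \<in> RR (ends H) K" "(q, p) \<in> RR (ends H) K"
    using pq assms(1) unfolding RR_def by (auto simp: insert_commute)
  show ?thesis
  proof (cases "p \<in> cmp")
    case True
    then have "q \<in> cmp" using st(1) unfolding cmp_def by (simp add: rtrancl_into_rtrancl)
    then show ?thesis using True pq by simp
  next
    case False
    then have "q \<in> cmp" using assms(2) pq by auto
    then have "p \<in> cmp" using st(2) unfolding cmp_def by (simp add: rtrancl_into_rtrancl)
    then show ?thesis using False by simp
  qed
qed

lemma cmp_ev: assumes "v \<in> cmp" shows "v \<in> ev (ends H) K"
proof (cases "v = a1")
  case True then show ?thesis using e1K e1e ev_subset[of e1 K "ends H"] by auto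
next
  case False
  have "(a1, v) \<in> (RR (ends H) K)\<^sup>*" using assms unfolding cmp_def by simp
  then obtain y where "(y, v) \<in> RR (ends H) K" using False by (metis rtranclE)
  then obtain f where "f \<in> K" "ends H f = {y, v}" unfolding RR_def by blast
  then show ?thesis unfolding ev_def by blast
qed

lemma cmpV: "cmp \<subseteq> verts H"
proof
  fix v assume "v \<in> cmp"
  then obtain f where "f \<in> K" "v \<in> ends H f" using cmp_ev unfolding ev_def by blast
  then show "v \<in> verts H" using KH ends_V by blast
qed

lemma ev_Cp: "ev (ends H) Cp = cmp"
proof
  show "ev (ends H) Cp \<subseteq> cmp" unfolding ev_def Cp_def by blast
  show "cmp \<subseteq> ev (ends H) Cp"
  proof
    fix v assume v: "v \<in> cmp"
    then obtain f where f: "f \<in> K" "v \<in> ends H f" using cmp_ev unfolding ev_def by blast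
    then have "ends H f \<subseteq> cmp" using cmp_step v by blast
    then have "f \<in> Cp" using f unfolding Cp_def by blast
    then show "v \<in> ev (ends H) Cp" using f unfolding ev_def by blast
  qed
qed

lemma Cp_deg: assumes "v \<in> cmp" shows "{f\<in>Cp. v \<in> ends H f} = {f\<in>K. v \<in> ends H f}"
  using cmp_step assms unfolding Cp_def by blast

lemma Cp_deg2: "\<forall>v\<in>ev (ends H) Cp. card {f\<in>Cp. v \<in> ends H f} = 2"
  using Cp_deg Kdeg cmp_ev unfolding ev_Cp by simp

lemma Cp_conn: "connected_via (ev (ends H) Cp) Cp (ends H)"
  unfolding conn_RR ev_Cp
proof (intro ballI)
  have rc: "(a1, v) \<in> (RR (ends H) Cp)\<^sup>*" if "v \<in> cmp" for v
  proof -
    have "(a1, v) \<in> (RR (ends H) K)\<^sup>*" using that unfolding cmp_def by simp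
    then show ?thesis
    proof (induction rule: rtrancl_induct)
      case base then show ?case by simp
    next
      case (step y z)
      then obtain f where f: "f \<in> K" "ends H f = {y, z}" unfolding RR_def by blast
      have "y \<in> cmp" using step(1) unfolding cmp_def by simp
      then have "ends H f \<subseteq> cmp" using cmp_step f by blast
      then have "f \<in> Cp" using f unfolding Cp_def by blast
      then have "(y, z) \<in> RR (ends H) Cp" using f unfolding RR_def by blast
      with step(3) show ?case by (rule rtrancl_into_rtrancl)
    qed
  qed
  fix u v assume "u \<in> cmp" "v \<in> cmp"
  then have "(u, a1) \<in> (RR (ends H) Cp)\<^sup>*" "(a1, v) \<in> (RR (ends H) Cp)\<^sup>*"
    using rc RR_rt_sym[OF rc[of u]] by auto
  then show "(u, v) \<in> (RR (ends H) Cp)\<^sup>*" by (rule rtrancl_trans)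
qed

lemma CpH: "Cp \<subseteq> edges H" using KH unfolding Cp_def by blast
lemma finCp: "finite Cp" using CpH finE by (rule finite_subset)

lemma FM_cover: assumes "v \<in> cmp" "v \<in> X" "v \<noteq> a1"
  shows "\<exists>!f. f \<in> FM \<and> v \<in> ends H f"
proof -
  obtain m where m: "m \<in> M" "v \<in> ends H m" using pm_ex[OF M(1) XV'[OF assms(2)]] by blast
  have mk: "m \<in> KX" using mK[OF assms(2,3) cmp_ev[OF assms(1)] m] .
  have "ends H m \<subseteq> cmp" using cmp_step[of m] mk m(2) assms(1) unfolding K_def by blast
  then have mF: "m \<in> FM" using m mk unfolding FM_def by blast
  show ?thesis
  proof (rule ex1I[of _ m])
    show "m \<in> FM \<and> v \<in> ends H m" using mF m by blast
    fix f assume "f \<in> FM \<and> v \<in> ends H f"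
    then show "f = m" using pm_uniq[OF M(1) XV'[OF assms(2)]] m unfolding FM_def by blast
  qed
qed

lemma a2c: "a2 \<in> cmp"
proof (rule ccontr)
  assume na2: "a2 \<notin> cmp"
  define W where "W = cmp \<inter> X"
  define FM' where "FM' = {f \<in> M'. f \<in> KX \<and> ends H f \<subseteq> cmp}"
  have "W \<subseteq> verts H" using cmpV unfolding W_def by blast
  then have finW: "finite W" using finV by (rule finite_subset)
  have a1W: "a1 \<in> W" using a1c e1e unfolding W_def by blast
  have c1: "card (W - {a1}) = 2 * card FM"
  proof (rule pm_card)
    show "finite (W - {a1})" using finW by simp
    have "FM \<subseteq> edges H" using MH unfolding FM_def by blast
    then show "finite FM" using finE by (rule finite_subset)
    show "\<forall>f\<in>FM. card (ends H f) = 2 \<and> ends H f \<subseteq> W - {a1}"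
    proof
      fix f assume f: "f \<in> FM"
      have "a1 \<notin> ends H f"
      proof
        assume a: "a1 \<in> ends H f"
        have "f = e1" using pm_uniq[OF M(1) XV'[OF e1e(2)]] f a e1M e1e unfolding FM_def by blast
        then show False using f KX_X e1e unfolding FM_def by blast
      qed
      then show "card (ends H f) = 2 \<and> ends H f \<subseteq> W - {a1}"
        using f KX_X card_ends MH unfolding FM_def W_def by blast
    qed
    show "\<forall>v\<in>W - {a1}. \<exists>!f. f \<in> FM \<and> v \<in> ends H f"
      using FM_cover unfolding W_def by blast
  qed
  have c2: "card W = 2 * card FM'"
  proof (rule pm_card)
    show "finite W" by (rule finW)
    have "FM' \<subseteq> edges H" using M'H unfolding FM'_def by blast
    then show "finite FM'" using finE by (rule finite_subset)
    show "\<forall>f\<in>FM'. card (ends H f) = 2 \<and> ends H f \<subseteq> W"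
      using KX_X card_ends M'H unfolding FM'_def W_def by blast
    show "\<forall>v\<in>W. \<exists>!f. f \<in> FM' \<and> v \<in> ends H f"
    proof
      fix v assume v: "v \<in> W"
      then have vv: "v \<in> cmp" "v \<in> X" "v \<noteq> a2" using na2 unfolding W_def by auto
      obtain m where m: "m \<in> M'" "v \<in> ends H m" using pm_ex[OF M'(1) XV'[OF vv(2)]] by blast
      have mk: "m \<in> KX" using m'K[OF vv(2,3) cmp_ev[OF vv(1)] m] .
      have "ends H m \<subseteq> cmp" using cmp_step[of m] mk m(2) vv(1) unfolding K_def by blast
      then have mF: "m \<in> FM'" using m mk unfolding FM'_def by blast
      show "\<exists>!f. f \<in> FM' \<and> v \<in> ends H f"
      proof (rule ex1I[of _ m])
        show "m \<in> FM' \<and> v \<in> ends H m" using mF m by blast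
        fix f assume "f \<in> FM' \<and> v \<in> ends H f"
        then show "f = m" using pm_uniq[OF M'(1) XV'[OF vv(2)]] m unfolding FM'_def by blast
      qed
    qed
  qed
  have "card (W - {a1}) = card W - 1" using a1W finW by simp
  moreover have "card W \<ge> 1" using a1W finW by (metis One_nat_def Suc_leI card_gt_0_iff empty_iff)
  ultimately show False using c1 c2 by presburger
qed

lemma b1c: "b1 \<in> cmp" and b2c: "b2 \<in> cmp"
proof -
  have "ends H e1 \<subseteq> cmp" using cmp_step[OF e1K] a1c e1e by blast
  then show "b1 \<in> cmp" using e1e by blast
  have "ends H e2 \<subseteq> cmp" using cmp_step[OF e2K] a2c e2e by blast
  then show "b2 \<in> cmp" using e2e by blast
qed

lemma Se1: "ends S e1 = {x, b1}" using S_ends e1e phi_in phi_inX by simp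
lemma Se2: "ends S e2 = {x, b2}" using S_ends e2e phi_in phi_inX by simp

lemma lift: assumes "y \<in> ev (ends S) C" "y \<noteq> x" shows "y \<in> cmp"
proof -
  have "(x, y) \<in> (RR (ends S) C)\<^sup>*" using conS xVs assms(1) unfolding conn_RR by blast
  then have "y = x \<or> y \<in> cmp"
  proof (induction rule: rtrancl_induct)
    case base then show ?case by simp
  next
    case (step y z)
    then obtain f where f: "f \<in> C" "ends S f = {y, z}" unfolding RR_def by blast
    show ?case
    proof (cases "f = e1")
      case True then have "z = x \<or> z = b1" using f Se1 by (auto simp: doubleton_eq_iff)
      then show ?thesis using b1c by blast
    next
      case n1: False
      show ?thesis
      proof (cases "f = e2")
        case True then have "z = x \<or> z = b2" using f Se2 by (auto simp: doubleton_eq_iff)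
        then show ?thesis using b2c by blast
      next
        case n2: False
        have eq: "ends H f = {y, z}" using kC_S[OF f(1) n1 n2] f(2) by simp
        have "ends H f \<inter> X = {}" using kC[OF f(1) n1 n2] .
        then have "y \<noteq> x" using eq xX by blast
        then have "y \<in> cmp" using step(3) by blast
        then have "ends H f \<subseteq> cmp" using cmp_step[of f] f(1) eq unfolding K_def by blast
        then show ?thesis using eq by blast
      qed
    qed
  qed
  then show ?thesis using assms(2) by blast
qed

lemma Vs_x: assumes "v \<in> ev (ends S) C" "v \<noteq> x" shows "v \<notin> X"
proof -
  obtain f where "f \<in> C" "v \<in> ends S f" using assms(1) unfolding ev_def by blast
  then obtain a where "v = phi a" using S_ends by auto
  then show ?thesis using assms(2) unfolding phi_def by (auto split: if_splits)
qed

lemma CCp: "C \<subseteq> Cp"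
proof
  fix f assume f: "f \<in> C"
  have "ends H f \<subseteq> cmp"
  proof (cases "f = e1 \<or> f = e2")
    case True then show ?thesis using e1e e2e a1c a2c b1c b2c by auto
  next
    case False
    then have eq: "ends S f = ends H f" and dj: "ends H f \<inter> X = {}" using kC_S kC f by auto
    show ?thesis
    proof
      fix v assume v: "v \<in> ends H f"
      then have "v \<in> ev (ends S) C" "v \<noteq> x" using eq f dj xX unfolding ev_def by auto
      then show "v \<in> cmp" using lift by blast
    qed
  qed
  then show "f \<in> Cp" using f unfolding Cp_def K_def by blast
qed

lemma cmpX: "cmp - X = ev (ends S) C - {x}"
proof
  show "cmp - X \<subseteq> ev (ends S) C - {x}"
  proof
    fix v assume v: "v \<in> cmp - X"
    then obtain f where f: "f \<in> K" "v \<in> ends H f" using cmp_ev unfolding ev_def by blast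
    then have "f \<in> C" using KX_X v unfolding K_def by blast
    moreover have "v \<in> ends S f" using f(2) phi_out v S_ends by simp
    ultimately show "v \<in> ev (ends S) C - {x}" using v xX unfolding ev_def by blast
  qed
  show "ev (ends S) C - {x} \<subseteq> cmp - X" using lift Vs_x by blast
qed

lemma e2FC: "e2 \<notin> FC"
proof
  assume "e2 \<in> FC"
  then have "e2 = e1" using FC(2,3) xVs Se1 Se2 by blast
  then show False using e12 by simp
qed

lemma FpC: "FC \<union> FM \<subseteq> Cp"
  using FC(1) CCp unfolding FM_def Cp_def K_def by blast

lemma Fp_pm: "\<forall>v\<in>cmp. \<exists>!f. f \<in> FC \<union> FM \<and> v \<in> ends H f"
proof
  fix v assume v: "v \<in> cmp"
  show "\<exists>!f. f \<in> FC \<union> FM \<and> v \<in> ends H f"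
  proof (cases "v \<in> X")
    case False
    then have vs: "v \<in> ev (ends S) C" using cmpX v by blast
    have eq: "\<And>e. v \<in> ends S e \<longleftrightarrow> v \<in> ends H e" using phi_out[OF False] S_ends by simp
    obtain f where f: "f \<in> FC" "v \<in> ends H f" and u: "\<And>g. g \<in> FC \<Longrightarrow> v \<in> ends H g \<Longrightarrow> g = f"
      using FC(3) vs eq by metis
    have nFM: "\<And>g. g \<in> FM \<Longrightarrow> v \<notin> ends H g" using False KX_X unfolding FM_def by blast
    show ?thesis
    proof (rule ex1I[of _ f])
      show "f \<in> FC \<union> FM \<and> v \<in> ends H f" using f by blast
      fix g assume "g \<in> FC \<union> FM \<and> v \<in> ends H g"
      then show "g = f" using u nFM by blast
    qed
  next
    case vX: True
    show ?thesis
    proof (cases "v = a1")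
      case True
      show ?thesis
      proof (rule ex1I[of _ e1])
        show "e1 \<in> FC \<union> FM \<and> v \<in> ends H e1" using FC(2) True e1e by blast
        fix g assume g: "g \<in> FC \<union> FM \<and> v \<in> ends H g"
        show "g = e1"
        proof (cases "g \<in> FC")
          case True
          have "x \<in> ends S g" using g vX phi_x S_ends by auto
          then show ?thesis using FC(3) xVs True FC(2) Se1 by blast
        next
          case False
          then have "g \<in> M" using g unfolding FM_def by blast
          then show ?thesis using pm_uniq[OF M(1) XV'[OF vX]] g e1M e1e \<open>v = a1\<close> by blast
        qed
      qed
    next
      case na1: False
      obtain f where f: "f \<in> FM" "v \<in> ends H f" and u: "\<And>g. g \<in> FM \<Longrightarrow> v \<in> ends H g \<Longrightarrow> g = f"
        using FM_cover[OF v vX na1] by metis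
      have nFC: "\<And>g. g \<in> FC \<Longrightarrow> v \<notin> ends H g"
      proof
        fix g assume g: "g \<in> FC" "v \<in> ends H g"
        then have "g = e2" using CX[of g v] FC(1) vX na1 by blast
        then show False using g e2FC by blast
      qed
      show ?thesis
      proof (rule ex1I[of _ f])
        show "f \<in> FC \<union> FM \<and> v \<in> ends H f" using f by blast
        fix g assume "g \<in> FC \<union> FM \<and> v \<in> ends H g"
        then show "g = f" using u nFC by blast
      qed
    qed
  qed
qed

lemma even_Cp: "even_cycle H Cp"
proof -
  have c2: "\<forall>f\<in>Cp. card (ends H f) = 2" using CpH card_ends by blast
  have pm: "\<forall>v\<in>ev (ends H) Cp. \<exists>!f. f \<in> FC \<union> FM \<and> v \<in> ends H f"
    using Fp_pm unfolding ev_Cp .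
  have ev: "even (card Cp)" by (rule pm_even[OF finCp c2 Cp_deg2 FpC pm])
  have ne: "Cp \<noteq> {}" using CCp e12C by blast
  show ?thesis unfolding even_cycle_def is_cycle_def edge_verts_ev
    using CpH ne finCp Cp_deg2 Cp_conn ev by simp
qed

lemma result: "\<exists>N. perfect_matching (delete_verts S (edge_verts S C)) N"
proof -
  obtain N where N: "perfect_matching (delete_verts H (ev (ends H) Cp)) N"
    using ce even_Cp unfolding cycle_extendable_def edge_verts_ev by blast
  have pm: "\<forall>v\<in>ev (ends H) Cp. \<exists>!f. f \<in> FC \<union> FM \<and> v \<in> ends H f"
    using Fp_pm unfolding ev_Cp .
  have PM: "perfect_matching H (N \<union> (FC \<union> FM))"
    by (rule pm_union[OF N refl FpC CpH pm])
  have N1: "N \<subseteq> edges H" and N2: "\<forall>f\<in>N. ends H f \<inter> ev (ends H) Cp = {}"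
    and N3: "\<forall>v\<in>verts H - ev (ends H) Cp. \<exists>!e. e \<in> N \<and> v \<in> ends H e"
    using N unfolding pm_delete_iff by auto
  have c0: "N \<inter> cut H X = {}"
  proof (rule ccontr)
    assume "N \<inter> cut H X \<noteq> {}"
    then obtain c where c: "c \<in> N" "c \<in> cut H X" by blast
    have "a1 \<in> ev (ends H) Cp" using a1c ev_Cp by simp
    then have "c \<noteq> e1" using N2 c(1) e1e by blast
    have "e1 \<in> (N \<union> (FC \<union> FM)) \<inter> cut H X" "c \<in> (N \<union> (FC \<union> FM)) \<inter> cut H X"
      using FC(2) e1cut c by auto
    moreover have "card ((N \<union> (FC \<union> FM)) \<inter> cut H X) = 1" using tight[OF PM] .
    ultimately show False using \<open>c \<noteq> e1\<close> by (metis card_1_singletonE singletonD)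
  qed
  have D': "ev (ends H) Cp \<subseteq> verts H" using cmpV ev_Cp by simp
  have DD: "ev (ends H) Cp - X = ev (ends S) C - {x}" using cmpX ev_Cp by simp
  have "perfect_matching (delete_verts S (insert x (ev (ends S) C - {x}))) {f\<in>N. ends H f \<inter> X = {}}"
    by (rule R2[OF N1 D' N3 N2 c0 DD])
  moreover have "insert x (ev (ends S) C - {x}) = edge_verts S C"
    using xVs unfolding edge_verts_ev by auto
  ultimately show ?thesis by auto
qed

end

context shr begin

lemma split_end: assumes "e \<in> edges H" "ends H e \<inter> X \<noteq> {}" "\<not> ends H e \<subseteq> X"
  shows "\<exists>a b. ends H e = {a, b} \<and> a \<in> X \<and> b \<notin> X"
proof -
  obtain p q where pq: "ends H e = {p, q}" using ends2 assms(1) by blast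
  show ?thesis
  proof (cases "p \<in> X")
    case True
    then have "q \<notin> X" using assms(3) pq by auto
    then show ?thesis using True pq by blast
  next
    case False
    then have "q \<in> X" using assms(2) pq by auto
    then show ?thesis using False pq by (metis insert_commute)
  qed
qed

lemma case2:
  assumes ce: "cycle_extendable H" and C: "even_cycle S C" and xin: "x \<in> edge_verts S C"
  shows "\<exists>M. perfect_matching (delete_verts S (edge_verts S C)) M"
proof -
  have cyc: "is_cycle S C" and evC: "even (card C)" using C unfolding even_cycle_def by auto
  have CS: "C \<subseteq> edges S" and finC: "finite C"
    and deg: "\<forall>v\<in>ev (ends S) C. card {e\<in>C. v \<in> ends S e} = 2"
    and con: "connected_via (ev (ends S) C) C (ends S)"
    using cyc unfolding is_cycle_def edge_verts_ev by auto
  have mcH: "matching_covered H" using ce unfolding cycle_extendable_def by simp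
  have "card {e\<in>C. x \<in> ends S e} = 2" using deg xin unfolding edge_verts_ev by blast
  then obtain e1 e2 where xe: "{e\<in>C. x \<in> ends S e} = {e1, e2}" and e12: "e1 \<noteq> e2"
    by (meson card_2_iff)
  have ee: "\<exists>a b. ends H e = {a, b} \<and> a \<in> X \<and> b \<notin> X" "e \<in> cut H X" "e \<in> edges H"
    if "e \<in> {e1, e2}" for e
  proof -
    have e: "e \<in> C" "x \<in> ends S e" using xe that by auto
    then have eS: "e \<in> edges S" using CS by blast
    then have "e \<in> edges H" "\<not> ends H e \<subseteq> X" using S_edges by auto
    moreover have "ends H e \<inter> X \<noteq> {}" using e phi_x S_ends by simp
    ultimately have h: "e \<in> edges H" "ends H e \<inter> X \<noteq> {}" "\<not> ends H e \<subseteq> X" by auto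
    show "\<exists>a b. ends H e = {a, b} \<and> a \<in> X \<and> b \<notin> X" using split_end[OF h] .
    show "e \<in> cut H X" unfolding cut_iff using h by simp
    show "e \<in> edges H" using h by simp
  qed
  obtain a1 b1 where e1e: "ends H e1 = {a1, b1}" "a1 \<in> X" "b1 \<notin> X" using ee(1)[of e1] by blast
  obtain a2 b2 where e2e: "ends H e2 = {a2, b2}" "a2 \<in> X" "b2 \<notin> X" using ee(1)[of e2] by blast
  obtain M where M: "perfect_matching H M" "e1 \<in> M"
    using mcH ee(3)[of e1] unfolding matching_covered_def by blast
  have "card (M \<inter> cut H X) = 1" using tight[OF M(1)] .
  then obtain c where "M \<inter> cut H X = {c}" by (rule card_1_singletonE)
  moreover have "e1 \<in> M \<inter> cut H X" using M(2) ee(2)[of e1] by simp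
  ultimately have MC: "M \<inter> cut H X = {e1}" by simp
  obtain M' where M': "perfect_matching H M'" "e2 \<in> M'"
    using mcH ee(3)[of e2] unfolding matching_covered_def by blast
  have "card (M' \<inter> cut H X) = 1" using tight[OF M'(1)] .
  then obtain c' where "M' \<inter> cut H X = {c'}" by (rule card_1_singletonE)
  moreover have "e2 \<in> M' \<inter> cut H X" using M'(2) ee(2)[of e2] by simp
  ultimately have MC': "M' \<inter> cut H X = {e2}" by simp
  have c2S: "\<forall>f\<in>C. card (ends S f) = 2" using CS wf_S unfolding wf_graph_def by (meson subsetD)
  have e1C: "e1 \<in> C" using xe by blast
  obtain FC where FC: "FC \<subseteq> C" "e1 \<in> FC" "\<forall>v\<in>ev (ends S) C. \<exists>!f. f \<in> FC \<and> v \<in> ends S f"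
    using even_cycle_pm[OF finC c2S deg con evC e1C] by blast
  note facts = shr_axioms ce cyc evC xe e12 e1e e2e M(1) MC M'(1) MC' FC
  have "c2 H X x C e1 e2 a1 a2 b1 b2 M M' FC"
    unfolding c2_def c2_axioms_def by (intro conjI; rule facts)
  then interpret c2 H X x C e1 e2 a1 a2 b1 b2 M M' FC .
  show ?thesis by (rule result)
qed

lemma ce_S: assumes ce: "cycle_extendable H" shows "cycle_extendable S"
  unfolding cycle_extendable_def
proof (intro conjI allI impI)
  show "matching_covered S" using mc_S ce unfolding cycle_extendable_def by blast
  fix C assume C: "even_cycle S C"
  show "\<exists>M. perfect_matching (delete_verts S (edge_verts S C)) M"
  proof (cases "x \<in> edge_verts S C")
    case True then show ?thesis using case2[OF ce C] by blast
  next
    case False then show ?thesis using case1[OF ce C] by blast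
  qed
qed

end

lemma ce_shrink:
  assumes "cycle_extendable H" "tight_cut H X" "x \<in> X" "verts H - X \<noteq> {}"
  shows "cycle_extendable (shrink H X x)"
proof -
  have wf: "wf_graph H" using assms(1) unfolding cycle_extendable_def matching_covered_def by simp
  interpret shr H X x
    using wf assms(2-4) unfolding tight_cut_def by unfold_locales auto
  show ?thesis using ce_S assms(1) by blast
qed

lemma cut_compl:
  assumes wf: "wf_graph H" shows "cut H (verts H - X) = cut H X"
proof -
  have "card (ends H e \<inter> (verts H - X)) = 1 \<longleftrightarrow> card (ends H e \<inter> X) = 1" if e: "e \<in> edges H" for e
  proof -
    have "card (ends H e) = 2" "ends H e \<subseteq> verts H" using wf e unfolding wf_graph_def by auto
    then obtain p q where pq: "ends H e = {p, q}" "p \<noteq> q" "p \<in> verts H" "q \<in> verts H"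
      by (metis card_2_iff insert_subset)
    show ?thesis using pq by (cases "p \<in> X"; cases "q \<in> X") auto
  qed
  then show ?thesis unfolding cut_def by auto
qed

lemma tc_ce: assumes "tc_piece G H" "cycle_extendable G" shows "cycle_extendable H"
  using assms
proof (induction rule: tc_piece.induct)
  case start then show ?case by simp
next
  case (split1 H X x)
  have ce: "cycle_extendable H" using split1 by simp
  have t: "tight_cut H X" "card (verts H - X) \<ge> 2" using split1(2) unfolding nontrivial_tight_cut_def by auto
  then have "verts H - X \<noteq> {}" by (metis card.empty not_numeral_le_zero)
  then show ?case using ce_shrink[OF ce t(1) split1(3)] by blast
next
  case (split2 H X y)
  have ce: "cycle_extendable H" using split2 by simp
  have wf: "wf_graph H" using ce unfolding cycle_extendable_def matching_covered_def by simp
  have t: "tight_cut H X" "card X \<ge> 2" using split2(2) unfolding nontrivial_tight_cut_def by auto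
  have XV: "X \<subseteq> verts H" using t(1) unfolding tight_cut_def by simp
  have t2: "tight_cut H (verts H - X)" using t(1) cut_compl[OF wf, of X] unfolding tight_cut_def by auto
  have "X \<noteq> {}" using t(2) by (metis card.empty not_numeral_le_zero)
  then have "verts H - (verts H - X) \<noteq> {}" using XV by blast
  then show ?case using ce_shrink[OF ce t2 split2(3)] by blast
qed

theorem corollary2p5:
  fixes G H :: "('v, 'e) mgraph"
  assumes "cycle_extendable G"
    and "is_brick G H \<or> is_brace G H"
  shows "cycle_extendable H"
proof -
  have "tc_piece G H" using assms(2) unfolding is_brick_def is_brace_def by blast
  then show ?thesis using tc_ce assms(1) by blast
qed

end
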